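(* Let $\mathbb F$ be an infinite field, $\mathbf z=(z_1,\dots,z_m)$ indeterminates, and $L(\mathbf z)\in\mathrm{Ten}_{\mathbb F[\mathbf z]}(n,d)$ a tensor whose entries are polynomials in $\mathbf z$. If $\mathrm{brk}_{\mathbb F}(L(\boldsymbol\beta))\le r$ for all $\boldsymbol\beta\in\mathbb F^m$, then $\mathrm{brk}_{\mathbb F(\mathbf z)}(L(\mathbf z))\le r$ and $\mathrm{brk}_{\overline{\mathbb F(\mathbf z)}}(L(\mathbf z))\le r$.
   Context: For a field $\mathbb L$, $I_{\mathbb L,r}$ is the ideal of polynomials on $\mathrm{Ten}_{\mathbb L}(n,d)=(\mathbb L^n)^{\otimes d}$ vanishing on all tensors of tensor rank $\le r$, and $\mathrm{brk}_{\mathbb L}(T)\le r$ means every polynomial in $I_{\mathbb L,r}$ vanishes at $T$ (i.e., $T$ lies in the Zariski closure of the tensors of rank $\le r$). Tensor rank is the least number of tensors $\mathbf v_1\otimes\cdots\otimes\mathbf v_d$ summing to the tensor. *)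

theory Defs
  imports "HOL-Library.Poly_Mapping" "HOL-Computational_Algebra.Fraction_Field"
          "HOL-Algebra.Algebraic_Closure_Type"
begin

text \<open>Multivariate polynomials over a commutative ring 'a in variables of type 'v are
  elements of the poly_mapping type from monomials (finitely supported exponent vectors) to 'a.\<close>
definition mpoly_eval :: "(('v \<Rightarrow>\<^sub>0 nat) \<Rightarrow>\<^sub>0 'a::comm_ring_1) \<Rightarrow> ('v \<Rightarrow> 'a) \<Rightarrow> 'a" where
  "mpoly_eval p x = (\<Sum>mn\<in>Poly_Mapping.keys p. Poly_Mapping.lookup p mn * (\<Prod>v\<in>Poly_Mapping.keys mn. x v ^ Poly_Mapping.lookup mn v))"

text \<open>Index set of Ten(n,d) = (L^n)^{\<otimes>d}: lists of length d with entries < n.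
  A tensor is a function from index lists to the field (only values on ten_idx matter).\<close>
definition ten_idx :: "nat \<Rightarrow> nat \<Rightarrow> nat list set" where
  "ten_idx n d = {is. length is = d \<and> set is \<subseteq> {..<n}}"

definition tensor_rank_le :: "nat \<Rightarrow> nat \<Rightarrow> nat \<Rightarrow> (nat list \<Rightarrow> 'a::field) \<Rightarrow> bool" where
  "tensor_rank_le n d r T \<longleftrightarrow>
     (\<exists>v :: nat \<Rightarrow> nat \<Rightarrow> nat \<Rightarrow> 'a. \<forall>is\<in>ten_idx n d.
        T is = (\<Sum>k<r. \<Prod>j<d. v k j (is ! j)))"

definition ten_poly :: "nat \<Rightarrow> nat \<Rightarrow> ((nat list \<Rightarrow>\<^sub>0 nat) \<Rightarrow>\<^sub>0 'a::field) \<Rightarrow> bool" where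
  "ten_poly n d p \<longleftrightarrow> (\<forall>mn\<in>Poly_Mapping.keys p. Poly_Mapping.keys mn \<subseteq> ten_idx n d)"

definition rank_ideal :: "nat \<Rightarrow> nat \<Rightarrow> nat \<Rightarrow> ((nat list \<Rightarrow>\<^sub>0 nat) \<Rightarrow>\<^sub>0 'a::field) set" where
  "rank_ideal n d r = {p. ten_poly n d p \<and>
      (\<forall>T :: nat list \<Rightarrow> 'a. tensor_rank_le n d r T \<longrightarrow> mpoly_eval p T = 0)}"

definition border_rank_le :: "nat \<Rightarrow> nat \<Rightarrow> nat \<Rightarrow> (nat list \<Rightarrow> 'a::field) \<Rightarrow> bool" where
  "border_rank_le n d r T \<longleftrightarrow> (\<forall>p\<in>(rank_ideal n d r :: ((nat list \<Rightarrow>\<^sub>0 nat) \<Rightarrow>\<^sub>0 'a) set).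
      mpoly_eval p T = 0)"

definition to_fract :: "'a::idom \<Rightarrow> 'a fract" where
  "to_fract x = Fract x 1"

end

theory Submission
  imports Defs "HOL-Computational_Algebra.Polynomial"
begin


lemma univ_zero:
  fixes a :: "nat \<Rightarrow> 'a::field"
  assumes inf: "infinite (UNIV :: 'a set)" and K: "finite K"
    and z: "\<forall>t::'a. (\<Sum>k\<in>K. a k * t ^ k) = 0"
  shows "\<forall>k\<in>K. a k = 0"
proof -
  define q where "q = (\<Sum>k\<in>K. monom (a k) k)"
  have "poly q t = 0" for t using z by (simp add: q_def poly_sum poly_monom)
  hence "{t. poly q t = 0} = UNIV" by auto
  hence "q = 0" using poly_roots_finite inf by metis
  show ?thesis
  proof
    fix k assume "k \<in> K"
    have "coeff q k = a k"
      unfolding q_def coeff_sum coeff_monom using K \<open>k\<in>K\<close>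
      by (simp add: sum.delta')
    thus "a k = 0" using \<open>q = 0\<close> by simp
  qed
qed

lemma id_aux:
  fixes c :: "'s \<Rightarrow> 'a::field" and e :: "'s \<Rightarrow> 'v \<Rightarrow> nat"
  assumes "finite V" and inf: "infinite (UNIV :: 'a set)"
  shows "finite S \<Longrightarrow> (\<forall>s\<in>S. \<forall>s'\<in>S. (\<forall>v\<in>V. e s v = e s' v) \<longrightarrow> s = s')
    \<Longrightarrow> (\<forall>\<beta>::'v\<Rightarrow>'a. (\<Sum>s\<in>S. c s * (\<Prod>v\<in>V. \<beta> v ^ e s v)) = 0) \<Longrightarrow> \<forall>s\<in>S. c s = 0"
  using assms(1)
proof (induction V arbitrary: S rule: finite_induct)
  case empty
  show ?case
  proof
    fix s assume s: "s \<in> S"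
    with empty.prems(2) have "S = {s}" by auto
    thus "c s = 0" using empty.prems(3) by simp
  qed
next
  case (insert w V)
  show ?case
  proof
    fix s0 assume s0: "s0 \<in> S"
    define k0 where "k0 = e s0 w"
    define S0 where "S0 = {s\<in>S. e s w = k0}"
    have "\<forall>\<beta>::'v\<Rightarrow>'a. (\<Sum>s\<in>S0. c s * (\<Prod>v\<in>V. \<beta> v ^ e s v)) = 0"
    proof
      fix \<beta> :: "'v \<Rightarrow> 'a"
      define A where "A k = (\<Sum>s\<in>{s\<in>S. e s w = k}. c s * (\<Prod>v\<in>V. \<beta> v ^ e s v))" for k
      have "\<forall>t. (\<Sum>k\<in>(\<lambda>s. e s w) ` S. A k * t ^ k) = 0"
      proof
        fix t
        have pv: "(\<Prod>v\<in>V. (\<beta>(w:=t)) v ^ e s v) = (\<Prod>v\<in>V. \<beta> v ^ e s v)" for s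
          using insert.hyps(2) by (intro prod.cong) auto
        have "0 = (\<Sum>s\<in>S. c s * (\<Prod>v\<in>insert w V. (\<beta>(w:=t)) v ^ e s v))"
          using insert.prems(3) by metis
        also have "\<dots> = (\<Sum>s\<in>S. t ^ e s w * (c s * (\<Prod>v\<in>V. \<beta> v ^ e s v)))"
        proof (intro sum.cong refl)
          fix s assume "s \<in> S"
          have "(\<Prod>v\<in>insert w V. (\<beta>(w:=t)) v ^ e s v) = t ^ e s w * (\<Prod>v\<in>V. (\<beta>(w:=t)) v ^ e s v)"
            using insert.hyps by simp
          also have "\<dots> = t ^ e s w * (\<Prod>v\<in>V. \<beta> v ^ e s v)" by (simp only: pv)
          finally show "c s * (\<Prod>v\<in>insert w V. (\<beta>(w:=t)) v ^ e s v) = t ^ e s w * (c s * (\<Prod>v\<in>V. \<beta> v ^ e s v))"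
            by simp
        qed
        also have "\<dots> = (\<Sum>k\<in>(\<lambda>s. e s w) ` S. (\<Sum>s\<in>{s\<in>S. e s w = k}. t ^ e s w * (c s * (\<Prod>v\<in>V. \<beta> v ^ e s v))))"
          using insert.prems(1) by (rule sum.image_gen)
        also have "\<dots> = (\<Sum>k\<in>(\<lambda>s. e s w) ` S. A k * t ^ k)"
          unfolding A_def sum_distrib_right
          by (intro sum.cong refl) (auto simp: mult.commute)
        finally show "(\<Sum>k\<in>(\<lambda>s. e s w) ` S. A k * t ^ k) = 0" by simp
      qed
      from univ_zero[OF inf _ this] insert.prems(1) s0
      have "A k0 = 0" unfolding k0_def by auto
      thus "(\<Sum>s\<in>S0. c s * (\<Prod>v\<in>V. \<beta> v ^ e s v)) = 0" by (simp add: A_def S0_def)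
    qed
    moreover have "finite S0" using insert.prems(1) by (simp add: S0_def)
    moreover have "\<forall>s\<in>S0. \<forall>s'\<in>S0. (\<forall>v\<in>V. e s v = e s' v) \<longrightarrow> s = s'"
      using insert.prems(2) by (auto simp: S0_def)
    ultimately have "\<forall>s\<in>S0. c s = 0" using insert.IH by blast
    thus "c s0 = 0" using s0 by (simp add: S0_def k0_def)
  qed
qed



definition mmono :: "('m::finite \<Rightarrow> 'a::comm_ring_1) \<Rightarrow> ('m \<Rightarrow>\<^sub>0 nat) \<Rightarrow> 'a" where
  "mmono \<beta> k = (\<Prod>v\<in>UNIV. \<beta> v ^ Poly_Mapping.lookup k v)"

definition ev :: "('m::finite \<Rightarrow> 'a::comm_ring_1) \<Rightarrow> (('m \<Rightarrow>\<^sub>0 nat) \<Rightarrow>\<^sub>0 'a) \<Rightarrow> 'a" where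
  "ev \<beta> g = (\<Sum>k\<in>Poly_Mapping.keys g. Poly_Mapping.lookup g k * mmono \<beta> k)"

lemma mpoly_eval_ev: "mpoly_eval g \<beta> = ev \<beta> (g :: ('m::finite \<Rightarrow>\<^sub>0 nat) \<Rightarrow>\<^sub>0 'a::comm_ring_1)"
  unfolding mpoly_eval_def ev_def mmono_def
  by (intro sum.cong refl arg_cong2[where f="(*)"] prod.mono_neutral_left)
     (auto simp: in_keys_iff)

lemma ev_superset:
  assumes "finite A" "Poly_Mapping.keys g \<subseteq> A"
  shows "ev \<beta> g = (\<Sum>k\<in>A. Poly_Mapping.lookup g k * mmono \<beta> k)"
  unfolding ev_def using assms
  by (intro sum.mono_neutral_left) (auto simp: in_keys_iff)

lemma ev_add: "ev \<beta> (f + g) = ev \<beta> f + ev \<beta> g"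
proof -
  let ?A = "Poly_Mapping.keys f \<union> Poly_Mapping.keys g"
  have "ev \<beta> (f + g) = (\<Sum>k\<in>?A. Poly_Mapping.lookup (f+g) k * mmono \<beta> k)"
    using keys_add[of f g] by (intro ev_superset) auto
  also have "\<dots> = (\<Sum>k\<in>?A. Poly_Mapping.lookup f k * mmono \<beta> k) + (\<Sum>k\<in>?A. Poly_Mapping.lookup g k * mmono \<beta> k)"
    by (simp add: lookup_add distrib_right sum.distrib)
  also have "\<dots> = ev \<beta> f + ev \<beta> g"
    by (subst (1 2) ev_superset[of ?A]) auto
  finally show ?thesis .
qed

lemma ev_zero[simp]: "ev \<beta> 0 = 0" by (simp add: ev_def)

lemma ev_sum: "ev \<beta> (\<Sum>i\<in>I. f i) = (\<Sum>i\<in>I. ev \<beta> (f i))"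
  by (induction I rule: infinite_finite_induct) (auto simp: ev_add)

lemma ev_single[simp]: "ev \<beta> (Poly_Mapping.single k a) = a * mmono \<beta> k"
  by (simp add: ev_def)

lemma mmono_add: "mmono \<beta> (k + l) = mmono \<beta> k * mmono \<beta> l"
  by (simp add: mmono_def lookup_add power_add prod.distrib)

lemma mmono_zero[simp]: "mmono \<beta> 0 = 1" by (simp add: mmono_def)

lemma pm_expand: "f = (\<Sum>k\<in>Poly_Mapping.keys f. Poly_Mapping.single k (Poly_Mapping.lookup f k))"
proof (rule poly_mapping_eqI)
  fix j
  show "Poly_Mapping.lookup f j = Poly_Mapping.lookup (\<Sum>k\<in>Poly_Mapping.keys f. Poly_Mapping.single k (Poly_Mapping.lookup f k)) j"
    by (simp add: lookup_sum lookup_single when_def sum.delta in_keys_iff)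
qed

lemma ev_mult: "ev \<beta> (f * g) = ev \<beta> f * ev \<beta> g"
proof -
  have "f * g = (\<Sum>k\<in>Poly_Mapping.keys f. Poly_Mapping.single k (Poly_Mapping.lookup f k)) *
                (\<Sum>l\<in>Poly_Mapping.keys g. Poly_Mapping.single l (Poly_Mapping.lookup g l))"
    by (rule arg_cong2[where f="(*)", OF pm_expand pm_expand])
  also have "\<dots> = (\<Sum>k\<in>Poly_Mapping.keys f. \<Sum>l\<in>Poly_Mapping.keys g.
       Poly_Mapping.single (k + l) (Poly_Mapping.lookup f k * Poly_Mapping.lookup g l))"
    by (simp only: sum_product mult_single)
  finally have "ev \<beta> (f * g) = (\<Sum>k\<in>Poly_Mapping.keys f. \<Sum>l\<in>Poly_Mapping.keys g.
       ev \<beta> (Poly_Mapping.single (k + l) (Poly_Mapping.lookup f k * Poly_Mapping.lookup g l)))"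
    by (simp only: ev_sum)
  also have "\<dots> = (\<Sum>k\<in>Poly_Mapping.keys f. \<Sum>l\<in>Poly_Mapping.keys g.
       (Poly_Mapping.lookup f k * mmono \<beta> k) * (Poly_Mapping.lookup g l * mmono \<beta> l))"
    by (intro sum.cong refl) (simp only: ev_single mmono_add mult_ac)
  also have "\<dots> = ev \<beta> f * ev \<beta> g"
    by (simp only: ev_def sum_product)
  finally show ?thesis .
qed

lemma ev_one[simp]: "ev \<beta> 1 = 1"
  by (simp add: ev_def lookup_one)

lemma ev_const[simp]: "ev \<beta> (Poly_Mapping.single 0 a) = a" by simp

lemma ev_prod: "ev \<beta> (\<Prod>i\<in>I. f i) = (\<Prod>i\<in>I. ev \<beta> (f i))"
  by (induction I rule: infinite_finite_induct) (auto simp: ev_mult)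

lemma ev_power: "ev \<beta> (f ^ n) = ev \<beta> f ^ n"
  by (induction n) (auto simp: ev_mult)

lemma identity_thm:
  fixes g :: "('m::finite \<Rightarrow>\<^sub>0 nat) \<Rightarrow>\<^sub>0 'a::field"
  assumes inf: "infinite (UNIV :: 'a set)" and z: "\<forall>\<beta>. mpoly_eval g \<beta> = 0"
  shows "g = 0"
proof -
  have 1: "finite (Poly_Mapping.keys g)" by simp
  have 2: "\<forall>s\<in>Poly_Mapping.keys g. \<forall>s'\<in>Poly_Mapping.keys g. (\<forall>v\<in>UNIV. Poly_Mapping.lookup s v = Poly_Mapping.lookup s' v) \<longrightarrow> s = s'"
    by (blast intro: poly_mapping_eqI)
  have 3: "\<forall>\<beta>::'m\<Rightarrow>'a. (\<Sum>s\<in>Poly_Mapping.keys g. Poly_Mapping.lookup g s * (\<Prod>v\<in>UNIV. \<beta> v ^ Poly_Mapping.lookup s v)) = 0"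
  proof
    fix \<beta> :: "'m \<Rightarrow> 'a"
    have "mpoly_eval g \<beta> = 0" using z by blast
    thus "(\<Sum>s\<in>Poly_Mapping.keys g. Poly_Mapping.lookup g s * (\<Prod>v\<in>UNIV. \<beta> v ^ Poly_Mapping.lookup s v)) = 0"
      by (simp only: mpoly_eval_ev ev_def mmono_def)
  qed
  have "\<forall>s\<in>Poly_Mapping.keys g. Poly_Mapping.lookup g s = 0"
    using id_aux[OF finite_UNIV inf 1 2 3] .
  thus ?thesis by (intro poly_mapping_eqI) (metis in_keys_iff lookup_zero)
qed



definition rhom :: "('a::comm_ring_1 \<Rightarrow> 'b::comm_ring_1) \<Rightarrow> bool" where
  "rhom f \<longleftrightarrow> f 0 = 0 \<and> f 1 = 1 \<and> (\<forall>a b. f (a + b) = f a + f b) \<and> (\<forall>a b. f (a * b) = f a * f b)"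

lemma rhom_sum: "rhom f \<Longrightarrow> f (\<Sum>i\<in>I. g i) = (\<Sum>i\<in>I. f (g i))"
  by (induction I rule: infinite_finite_induct) (auto simp: rhom_def)

lemma rhom_prod: "rhom f \<Longrightarrow> f (\<Prod>i\<in>I. g i) = (\<Prod>i\<in>I. f (g i))"
  by (induction I rule: infinite_finite_induct) (auto simp: rhom_def)

lemma rhom_power: "rhom f \<Longrightarrow> f (x ^ k) = f x ^ k"
  by (induction k) (auto simp: rhom_def)

lemma rhom_comp: "rhom f \<Longrightarrow> rhom g \<Longrightarrow> rhom (g \<circ> f)"
  by (simp add: rhom_def)

lemma mpoly_eval_superset:
  assumes "finite A" "Poly_Mapping.keys q \<subseteq> A"
  shows "mpoly_eval q x = (\<Sum>mn\<in>A. Poly_Mapping.lookup q mn *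
            (\<Prod>v\<in>Poly_Mapping.keys mn. x v ^ Poly_Mapping.lookup mn v))"
  unfolding mpoly_eval_def using assms
  by (intro sum.mono_neutral_left) (auto simp: in_keys_iff)

lemma main:
  fixes L :: "nat list \<Rightarrow> (('m::finite \<Rightarrow>\<^sub>0 nat) \<Rightarrow>\<^sub>0 'a::field)"
    and \<psi> :: "(('m \<Rightarrow>\<^sub>0 nat) \<Rightarrow>\<^sub>0 'a) \<Rightarrow> 'k::field"
  assumes inf: "infinite (UNIV :: 'a set)"
    and hyp: "\<forall>\<beta> :: 'm \<Rightarrow> 'a. border_rank_le n d r (\<lambda>is. mpoly_eval (L is) \<beta>)"
    and psi: "rhom \<psi>"
  shows "border_rank_le n d r (\<lambda>is. \<psi> (L is))"
  unfolding border_rank_le_def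
proof
  fix p :: "(nat list \<Rightarrow>\<^sub>0 nat) \<Rightarrow>\<^sub>0 'k"
  assume pI: "p \<in> rank_ideal n d r"
  define h where "h a = \<psi> (Poly_Mapping.single 0 a)" for a
  have sm: "Poly_Mapping.single 0 (x * y) = Poly_Mapping.single 0 x * Poly_Mapping.single (0::'m \<Rightarrow>\<^sub>0 nat) y" for x y :: 'a
    by (simp add: mult_single)
  have hh: "rhom h"
    using psi unfolding rhom_def h_def
    by (simp add: single_add sm)
  have h0: "h 0 = 0" and h1: "h 1 = 1" and hadd: "h (a + b) = h a + h b" and hmul: "h (a * b) = h a * h b" for a b
    using hh by (auto simp: rhom_def)
  interpret V: vector_space "\<lambda>a (x::'k). h a * x"
    by unfold_locales (simp_all add: hadd hmul h1 algebra_simps)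
  define P where "P = Poly_Mapping.keys p"
  have finP: "finite P" by (simp add: P_def)
  define C where "C = Poly_Mapping.lookup p ` P"
  obtain B where BC: "B \<subseteq> C" and Bind: "V.independent B" and CB: "C \<subseteq> V.span B"
    by (rule V.maximal_independent_subset)
  have finB: "finite B" using BC finP finite_subset unfolding C_def by blast
  have "\<forall>mn\<in>P. \<exists>u. Poly_Mapping.lookup p mn = (\<Sum>b\<in>B. h (u b) * b)"
    using CB V.span_finite[OF finB] unfolding C_def by auto
  then obtain a where a: "\<And>mn. mn \<in> P \<Longrightarrow> Poly_Mapping.lookup p mn = (\<Sum>b\<in>B. h (a mn b) * b)"
    by metis
  define M where "M x mn = (\<Prod>v\<in>Poly_Mapping.keys mn. x v ^ Poly_Mapping.lookup mn v)"
    for x :: "nat list \<Rightarrow> 'k" and mn :: "nat list \<Rightarrow>\<^sub>0 nat"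
  define S where "S x b = (\<Sum>mn\<in>P. h (a mn b) * M x mn)" for x b
  have E1: "mpoly_eval p x = (\<Sum>b\<in>B. S x b * b)" for x
  proof -
    have "mpoly_eval p x = (\<Sum>mn\<in>P. (\<Sum>b\<in>B. h (a mn b) * b) * M x mn)"
      unfolding mpoly_eval_def P_def[symmetric] M_def[symmetric]
      by (intro sum.cong refl) (simp add: a)
    also have "\<dots> = (\<Sum>mn\<in>P. \<Sum>b\<in>B. h (a mn b) * M x mn * b)"
      by (intro sum.cong refl) (simp only: sum_distrib_right, simp add: mult_ac)
    also have "\<dots> = (\<Sum>b\<in>B. S x b * b)"
      unfolding S_def by (subst sum.swap) (simp add: sum_distrib_right)
    finally show ?thesis .
  qed
  define pb where "pb b = (\<Sum>mn\<in>P. Poly_Mapping.single mn (a mn b))" for b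
  have lpb: "Poly_Mapping.lookup (pb b) mn = (if mn \<in> P then a mn b else 0)" for b mn
    unfolding pb_def lookup_sum lookup_single using finP
    by (simp add: when_def sum.delta)
  have kpb: "Poly_Mapping.keys (pb b) \<subseteq> P" for b
    using lpb by (auto simp: in_keys_iff split: if_splits)
  have pb_eval: "mpoly_eval (pb b) x = (\<Sum>mn\<in>P. a mn b * (\<Prod>v\<in>Poly_Mapping.keys mn. x v ^ Poly_Mapping.lookup mn v))"
    for b x
    using mpoly_eval_superset[OF finP kpb] by (simp add: lpb)
  have pb_ideal: "pb b \<in> rank_ideal n d r" if bB: "b \<in> B" for b
  proof -
    have tp: "ten_poly n d (pb b)"
      using pI kpb unfolding rank_ideal_def ten_poly_def P_def by blast
    have "mpoly_eval (pb b) T' = 0" if T': "tensor_rank_le n d r T'" for T' :: "nat list \<Rightarrow> 'a"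
    proof -
      have "tensor_rank_le n d r (\<lambda>is. h (T' is))"
      proof -
        obtain v where v: "\<forall>is\<in>ten_idx n d. T' is = (\<Sum>k<r. \<Prod>j<d. v k j (is ! j))"
          using T' unfolding tensor_rank_le_def by blast
        have "\<forall>is\<in>ten_idx n d. h (T' is) = (\<Sum>k<r. \<Prod>j<d. h (v k j (is ! j)))"
          using v by (simp add: rhom_sum[OF hh] rhom_prod[OF hh])
        thus ?thesis unfolding tensor_rank_le_def
          by (intro exI[where x="\<lambda>k j i. h (v k j i)"]) simp
      qed
      hence "mpoly_eval p (\<lambda>is. h (T' is)) = 0" using pI by (simp add: rank_ideal_def)
      hence z: "(\<Sum>b\<in>B. S (\<lambda>is. h (T' is)) b * b) = 0" using E1 by simp
      have Sh: "S (\<lambda>is. h (T' is)) b = h (mpoly_eval (pb b) T')" for b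
      proof -
        have "h (mpoly_eval (pb b) T') = (\<Sum>mn\<in>P. h (a mn b * (\<Prod>v\<in>Poly_Mapping.keys mn. T' v ^ Poly_Mapping.lookup mn v)))"
          by (simp only: pb_eval rhom_sum[OF hh])
        also have "\<dots> = (\<Sum>mn\<in>P. h (a mn b) * (\<Prod>v\<in>Poly_Mapping.keys mn. h (T' v) ^ Poly_Mapping.lookup mn v))"
          by (simp only: hmul rhom_prod[OF hh] rhom_power[OF hh])
        finally show ?thesis unfolding S_def M_def by simp
      qed
      have sz: "(\<Sum>b\<in>B. h (mpoly_eval (pb b) T') * b) = 0" using z by (simp only: Sh)
      have "\<not> (\<exists>u. (\<exists>v\<in>B. u v \<noteq> 0) \<and> (\<Sum>v\<in>B. h (u v) * v) = 0)"
        using Bind V.dependent_finite[OF finB] by simp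
      hence ndep: "\<And>u. (\<Sum>v\<in>B. h (u v) * v) = 0 \<Longrightarrow> \<forall>v\<in>B. u v = 0" by blast
      from ndep[OF sz] bB show ?thesis by simp
    qed
    thus ?thesis using tp by (simp add: rank_ideal_def)
  qed
  have Szero: "S (\<lambda>is. \<psi> (L is)) b = 0" if bB: "b \<in> B" for b
  proof -
    define g where "g = (\<Sum>mn\<in>P. Poly_Mapping.single 0 (a mn b) *
        (\<Prod>v\<in>Poly_Mapping.keys mn. L v ^ Poly_Mapping.lookup mn v))"
    have "mpoly_eval g \<beta> = 0" for \<beta>
    proof -
      have "mpoly_eval g \<beta> = mpoly_eval (pb b) (\<lambda>is. mpoly_eval (L is) \<beta>)"
        unfolding mpoly_eval_ev g_def pb_eval
        by (simp add: ev_sum ev_mult ev_prod ev_power mpoly_eval_ev)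
      also have "\<dots> = 0" using hyp pb_ideal[OF bB] unfolding border_rank_le_def by blast
      finally show ?thesis .
    qed
    hence "g = 0" using identity_thm[OF inf] by blast
    hence "\<psi> g = 0" using psi by (simp add: rhom_def)
    moreover have "\<psi> g = S (\<lambda>is. \<psi> (L is)) b"
      unfolding g_def S_def M_def
      using psi by (simp add: rhom_sum rhom_prod rhom_power h_def rhom_def)
    ultimately show ?thesis by simp
  qed
  show "mpoly_eval p (\<lambda>is. \<psi> (L is)) = 0"
    by (simp add: E1 Szero)
qed



lemma rhom_to_fract: "rhom (to_fract :: 'a::idom \<Rightarrow> 'a fract)"
  unfolding rhom_def to_fract_def by (simp add: Zero_fract_def One_fract_def)

lemma rhom_to_ac: "rhom (to_ac :: 'a::field \<Rightarrow> 'a alg_closure)"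
  unfolding rhom_def by simp

theorem corollaryA2:
  fixes L :: "nat list \<Rightarrow> (('m::{finite,linorder} \<Rightarrow>\<^sub>0 nat) \<Rightarrow>\<^sub>0 'a::field)"
    and n d r :: nat
  assumes "infinite (UNIV :: 'a set)"
    and "\<forall>\<beta> :: 'm \<Rightarrow> 'a. border_rank_le n d r (\<lambda>is. mpoly_eval (L is) \<beta>)"
  shows "border_rank_le n d r (\<lambda>is. to_fract (L is)) \<and>
         border_rank_le n d r (\<lambda>is. to_ac (to_fract (L is)))"
proof
  show "border_rank_le n d r (\<lambda>is. to_fract (L is))"
    by (rule main[OF assms rhom_to_fract])
  have "border_rank_le n d r (\<lambda>is. (to_ac \<circ> to_fract) (L is))"
    by (rule main[OF assms rhom_comp[OF rhom_to_fract rhom_to_ac]])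
  thus "border_rank_le n d r (\<lambda>is. to_ac (to_fract (L is)))" by simp
qed


end
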